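(* Let $d\ge2$ and let $R=(r_{ij})$ be a real $d\times d$ matrix with $r_{ii}=1$ for all $i$. Assume $R$ is not an $\mathcal S$-matrix, every principal sub-matrix of $R$ other than $R$ itself is completely-$\mathcal S$, and $\det R=0$. Then $R$ has rank $d-1$, there exists a column vector $U>0$ with $RU=0$, and there exists a row vector $a>0$ with $aR=0$.
   Context: $x>0$ (resp. $x\ge0$) means all entries positive (resp. non-negative). A square matrix $M$ is an $\mathcal S$-matrix if there exists a vector $x\ge0$ with $Mx>0$; it is completely-$\mathcal S$ if all its principal sub-matrices (sub-matrices $(m_{ij})_{i,j\in I}$ for non-empty index sets $I$, including the full set) are $\mathcal S$-matrices. *)

theory Defs
  imports "HOL-Analysis.Analysis"
begin

definition pos_vec :: "real ^ 'n \<Rightarrow> bool" where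
  "pos_vec x \<longleftrightarrow> (\<forall>i. x $ i > 0)"

definition nonneg_vec :: "real ^ 'n \<Rightarrow> bool" where
  "nonneg_vec x \<longleftrightarrow> (\<forall>i. x $ i \<ge> 0)"

definition S_matrix :: "real ^ 'n ^ 'n \<Rightarrow> bool" where
  "S_matrix M \<longleftrightarrow> (\<exists>x. nonneg_vec x \<and> pos_vec (M *v x))"

definition principal_S :: "real ^ 'n ^ 'n \<Rightarrow> 'n set \<Rightarrow> bool" where
  "principal_S M I \<longleftrightarrow>
     (\<exists>x :: 'n \<Rightarrow> real. (\<forall>j\<in>I. x j \<ge> 0) \<and> (\<forall>i\<in>I. (\<Sum>j\<in>I. M $ i $ j * x j) > 0))"

definition completely_S_on :: "real ^ 'n ^ 'n \<Rightarrow> 'n set \<Rightarrow> bool" where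
  "completely_S_on M J \<longleftrightarrow> (\<forall>I. I \<noteq> {} \<and> I \<subseteq> J \<longrightarrow> principal_S M I)"

end

theory Submission
  imports Defs
begin

lemma eps_lim:
  fixes A B :: real
  assumes "\<forall>e>0. 0 \<le> A + e * B"
  shows "0 \<le> A"
proof (rule ccontr)
  assume "\<not> 0 \<le> A"
  hence A: "A < 0" by simp
  show False
  proof (cases "B \<le> 0")
    case True
    then show ?thesis using assms[rule_format, of 1] A by simp
  next
    case False
    have pos: "-A/(2*B) > 0" using A False by (simp add: field_simps)
    have "0 \<le> A + (-A/(2*B)) * B" using assms pos by blast
    also have "\<dots> = A/2" using False by (simp add: field_simps)
    finally show False using A by simp
  qed
qed

lemma lin_all:
  fixes c d :: real
  assumes "\<forall>t. 0 \<le> c + t * d"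
  shows "d = 0"
proof (rule ccontr)
  assume d: "d \<noteq> 0"
  have "0 \<le> c + (-(c+1)/d) * d" using assms by blast
  also have "\<dots> = -1" using d by (simp add: field_simps)
  finally show False by simp
qed

lemma keyK:
  fixes R :: "real ^ 'n ^ 'n" and y :: "real ^ 'n"
  assumes H: "\<forall>J. J \<noteq> {} \<and> J \<subset> UNIV \<longrightarrow> completely_S_on R J"
    and y0: "\<forall>i. y $ i \<ge> 0"
    and yR: "\<forall>j. (y v* R) $ j \<le> 0"
    and yk: "y $ k = 0"
  shows "y = 0"
proof -
  define I where "I = {i. y $ i > 0}"
  have "I = {}"
  proof (rule ccontr)
    assume ne: "I \<noteq> {}"
    have "k \<notin> I" using yk I_def by simp
    hence "I \<subset> UNIV" by auto
    with ne H have "completely_S_on R I" by blast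
    hence "principal_S R I" using ne unfolding completely_S_on_def by blast
    then obtain x where x0: "\<forall>j\<in>I. x j \<ge> 0" and xp: "\<forall>i\<in>I. (\<Sum>j\<in>I. R $ i $ j * x j) > 0"
      unfolding principal_S_def by blast
    have "0 < (\<Sum>i\<in>I. y $ i * (\<Sum>j\<in>I. R $ i $ j * x j))"
      by (rule sum_pos) (use ne xp I_def in auto)
    also have "\<dots> = (\<Sum>i\<in>I. \<Sum>j\<in>I. x j * (y $ i * R $ i $ j))"
      by (simp add: sum_distrib_left mult_ac)
    also have "\<dots> = (\<Sum>j\<in>I. \<Sum>i\<in>I. x j * (y $ i * R $ i $ j))"
      by (rule sum.swap)
    also have "\<dots> = (\<Sum>j\<in>I. x j * (\<Sum>i\<in>I. y $ i * R $ i $ j))"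
      by (simp add: sum_distrib_left)
    also have "\<dots> = (\<Sum>j\<in>I. x j * (y v* R) $ j)"
    proof (rule sum.cong[OF refl])
      fix j assume "j \<in> I"
      have "(\<Sum>i\<in>I. y $ i * R $ i $ j) = (\<Sum>i\<in>UNIV. y $ i * R $ i $ j)"
        by (rule sum.mono_neutral_left) (use y0 I_def in \<open>auto simp: not_less order.antisym\<close>)
      then show "x j * (\<Sum>i\<in>I. y $ i * R $ i $ j) = x j * (y v* R) $ j"
        by (simp add: vector_matrix_mult_def)
    qed
    also have "\<dots> \<le> 0"
      by (rule sum_nonpos) (use x0 yR in \<open>auto intro: mult_nonneg_nonpos\<close>)
    finally show False by simp
  qed
  then show ?thesis using y0 I_def by (auto simp: vec_eq_iff not_less intro: order.antisym)
qed

lemma shift: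
  fixes a v :: "real ^ 'n"
  assumes a: "\<forall>i. a $ i > 0" and vk: "v $ k > 0"
  shows "\<exists>t>0. (\<forall>i. (a - t *\<^sub>R v) $ i \<ge> 0) \<and> (\<exists>m. (a - t *\<^sub>R v) $ m = 0)"
proof -
  define P where "P = {i. v $ i > 0}"
  define t where "t = Min ((\<lambda>i. a $ i / v $ i) ` P)"
  have fin: "finite ((\<lambda>i. a $ i / v $ i) ` P)" by simp
  have ne: "(\<lambda>i. a $ i / v $ i) ` P \<noteq> {}" using vk P_def by auto
  have "t \<in> (\<lambda>i. a $ i / v $ i) ` P" unfolding t_def using Min_in[OF fin ne] .
  then obtain m where m: "m \<in> P" "t = a $ m / v $ m" by auto
  have tpos: "t > 0" using m a P_def by simp
  have le: "\<forall>i. (a - t *\<^sub>R v) $ i \<ge> 0"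
  proof
    fix i
    show "(a - t *\<^sub>R v) $ i \<ge> 0"
    proof (cases "v $ i > 0")
      case True
      hence "t \<le> a $ i / v $ i" unfolding t_def using P_def by (intro Min_le) auto
      hence "t * v $ i \<le> a $ i" using True by (simp add: field_simps)
      thus ?thesis by simp
    next
      case False
      hence "t * v $ i \<le> 0" using tpos by (simp add: mult_nonneg_nonpos)
      thus ?thesis using a[rule_format, of i] by simp
    qed
  qed
  have "(a - t *\<^sub>R v) $ m = 0" using m P_def by simp
  thus ?thesis using tpos le by blast
qed

lemma convex_nonneg: "convex {x :: real ^ 'n. \<forall>i. x $ i \<ge> 0}"
  unfolding convex_def by (auto intro!: add_nonneg_nonneg mult_nonneg_nonneg)

lemma comb_pos: "0 \<le> (u::real) \<Longrightarrow> 0 \<le> v \<Longrightarrow> u + v = 1 \<Longrightarrow> 0 < x \<Longrightarrow> 0 < y \<Longrightarrow> 0 < u * x + v * y"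
  by (smt (verit, best) mult_nonneg_nonneg mult_pos_pos)

lemma convex_pos: "convex {x :: real ^ 'n. \<forall>i. x $ i > 0}"
  unfolding convex_def by (auto intro!: comb_pos)

lemma inner_ones: "inner z (\<chi> j. e) = e * sum (\<lambda>j. (z::real^'n) $ j) UNIV"
  by (simp add: inner_vec_def sum_distrib_left mult_ac)

lemma ville:
  fixes R :: "real ^ 'n ^ 'n"
  assumes "\<not> S_matrix R"
  shows "\<exists>y. y \<noteq> 0 \<and> (\<forall>i. y $ i \<ge> 0) \<and> (\<forall>j. (y v* R) $ j \<le> 0)"
proof -
  define A where "A = (\<lambda>x. R *v x) ` {x. \<forall>i. x $ i \<ge> 0}"
  define B where "B = {q :: real ^ 'n. \<forall>i. q $ i > 0}"
  define S where "S = (\<Union>x\<in>A. \<Union>y\<in>B. {x - y})"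
  have cS: "convex S" unfolding S_def A_def B_def
    by (intro convex_differences convex_linear_image convex_nonneg convex_pos) simp
  have "0 \<notin> S"
  proof
    assume "0 \<in> S"
    then obtain x q where "\<forall>i. x $ i \<ge> 0" "\<forall>i. q $ i > 0" "R *v x - q = 0"
      unfolding S_def A_def B_def by auto
    then show False using assms unfolding S_matrix_def nonneg_vec_def pos_vec_def by auto
  qed
  then obtain z where z0: "z \<noteq> 0" and zS: "\<forall>s\<in>S. 0 \<le> inner z s"
    using separating_hyperplane_set_0[OF cS] by blast
  have key: "0 \<le> inner (z v* R) x - inner z q" if "\<forall>i. x $ i \<ge> 0" "\<forall>i. q $ i > 0" for x q
  proof -
    have "R *v x - q \<in> S" unfolding S_def A_def B_def using that by blast
    then have "0 \<le> inner z (R *v x - q)" using zS by blast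
    then show ?thesis by (simp add: inner_diff_right dot_lmul_matrix)
  qed
  have zneg: "z $ i \<le> 0" for i
  proof -
    have h: "0 \<le> - z $ i + e * (- sum (\<lambda>j. z $ j) UNIV)" if "e > 0" for e
    proof -
      have "0 \<le> inner (z v* R) 0 - inner z (axis i 1 + (\<chi> j. e))"
        by (rule key) (use that in \<open>auto simp: axis_def\<close>)
      then show ?thesis by (simp add: inner_add_right inner_axis inner_ones)
    qed
    have "0 \<le> - z $ i" by (rule eps_lim[of _ "- sum (\<lambda>j. z $ j) UNIV"]) (use h in blast)
    then show ?thesis by simp
  qed
  have zR: "(z v* R) $ j \<ge> 0" for j
  proof -
    have h: "0 \<le> (z v* R) $ j + e * (- sum (\<lambda>j. z $ j) UNIV)" if "e > 0" for e
    proof -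
      have "0 \<le> inner (z v* R) (axis j 1) - inner z (\<chi> j. e)"
        by (rule key) (use that in \<open>auto simp: axis_def\<close>)
      then show ?thesis by (simp add: inner_axis inner_ones)
    qed
    show ?thesis by (rule eps_lim[of _ "- sum (\<lambda>j. z $ j) UNIV"]) (use h in blast)
  qed
  show ?thesis
  proof (intro exI[of _ "-z"] conjI allI)
    show "- z \<noteq> 0" using z0 by simp
    show "0 \<le> (- z) $ i" for i using zneg[of i] by simp
    show "((- z) v* R) $ j \<le> 0" for j
      using zR[of j] scaleR_vector_matrix_assoc[of "-1" z R] by simp
  qed
qed

lemma posK:
  fixes R :: "real ^ 'n ^ 'n" and y :: "real ^ 'n"
  assumes H: "\<forall>J. J \<noteq> {} \<and> J \<subset> UNIV \<longrightarrow> completely_S_on R J"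
    and y0: "\<forall>i. y $ i \<ge> 0"
    and yR: "\<forall>j. (y v* R) $ j \<le> 0"
    and yne: "y \<noteq> 0"
  shows "y $ i > 0"
proof -
  have "y $ i \<noteq> 0" using keyK[OF H y0 yR, of i] yne by auto
  then show ?thesis using y0 by (simp add: order_less_le)
qed

lemma zc2:
  fixes R :: "real ^ 'n ^ 'n" and b w :: "real ^ 'n"
  assumes H: "\<forall>J. J \<noteq> {} \<and> J \<subset> UNIV \<longrightarrow> completely_S_on R J"
    and b: "\<forall>i. b $ i > 0" and wk: "w $ k > 0"
    and le: "\<forall>t>0. \<forall>j. ((b - t *\<^sub>R w) v* R) $ j \<le> 0"
  shows "\<exists>t>0. b = t *\<^sub>R w"
proof -
  obtain t where t: "t > 0" "\<forall>i. (b - t *\<^sub>R w) $ i \<ge> 0" "\<exists>m. (b - t *\<^sub>R w) $ m = 0"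
    using shift[OF b wk] by blast
  then obtain m where "(b - t *\<^sub>R w) $ m = 0" by blast
  moreover have "\<forall>j. ((b - t *\<^sub>R w) v* R) $ j \<le> 0" using le t(1) by blast
  ultimately have "b - t *\<^sub>R w = 0" using keyK[OF H t(2)] by blast
  then have "b = t *\<^sub>R w" by simp
  then show ?thesis using t(1) by blast
qed

lemma vm_lin: "((b::real^'n) - t *\<^sub>R w) v* R = b v* R - t *\<^sub>R (w v* R)"
  by (simp add: vector_matrix_mult_diff_distrib scaleR_vector_matrix_assoc)

lemma vm_neg: "(- (w::real^'n)) v* R = - (w v* R)"
  using scaleR_vector_matrix_assoc[of "-1" w R] by simp

theorem lemma2:
  fixes R :: "real ^ 'n ^ 'n"
  assumes "CARD('n) \<ge> 2"
    and "\<forall>i. R $ i $ i = 1"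
    and "\<not> S_matrix R"
    and "\<forall>J. J \<noteq> {} \<and> J \<subset> UNIV \<longrightarrow> completely_S_on R J"
    and "det R = 0"
  shows "rank R = CARD('n) - 1
         \<and> (\<exists>U. pos_vec U \<and> R *v U = 0)
         \<and> (\<exists>a. pos_vec a \<and> a v* R = 0)"
proof -
  note H = assms(4)
  obtain y0 where y0: "y0 \<noteq> 0" "\<forall>i. y0 $ i \<ge> 0" "\<forall>j. (y0 v* R) $ j \<le> 0"
    using ville[OF assms(3)] by blast
  have y0pos: "\<forall>i. y0 $ i > 0" using posK[OF H y0(2,3,1)] by blast
  define f where "f = (\<lambda>x. transpose R *v x)"
  have fx: "f x = x v* R" for x unfolding f_def by simp
  have ninj: "\<not> inj f"
  proof -
    have "det (matrix f) = 0" unfolding f_def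
      by (simp add: matrix_of_matrix_vector_mul det_transpose assms(5))
    then show ?thesis using det_nz_iff_inj_gen[of f] unfolding f_def
      using matrix_vector_mul_linear_gen by blast
  qed
  then obtain x1 x2 where "x1 \<noteq> x2" "f x1 = f x2" unfolding inj_def by blast
  then obtain v where v: "v \<noteq> 0" "v v* R = 0"
    by (intro that[of "x1 - x2"]) (auto simp: fx vector_matrix_mult_diff_distrib)
  have sgn: "\<exists>w c. (\<exists>k. w $ k > 0) \<and> w v* R = 0 \<and> v = c *\<^sub>R w"
    if vne: "v \<noteq> 0" and vR: "v v* R = 0" for v
  proof -
    obtain k where k: "v $ k \<noteq> 0" using vne by (metis vec_eq_iff zero_index)
    show ?thesis
    proof (cases "v $ k > 0")
      case True then show ?thesis using vR by (intro exI[of _ v] exI[of _ 1]) auto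
    next
      case False
      then have "(- v) $ k > 0" using k by simp
      then show ?thesis using vR by (intro exI[of _ "- v"] exI[of _ "-1"]) (auto simp: vm_neg)
    qed
  qed
  have zc: "\<exists>t>0. b = t *\<^sub>R w"
    if b: "\<forall>i. b $ i > 0" and bR: "\<forall>j. (b v* R) $ j \<le> 0" and wk: "w $ k > 0" and wR: "w v* R = 0"
    for b w k
    by (rule zc2[OF H b wk]) (use bR wR in \<open>simp add: vm_lin\<close>)
  obtain w c where w: "\<exists>k. w $ k > 0" "w v* R = 0" "v = c *\<^sub>R w"
    using sgn[OF v] by blast
  obtain t where "t > 0" "y0 = t *\<^sub>R w" using zc[OF y0pos y0(3)] w by blast
  then have y0R: "y0 v* R = 0" using w(2) by (simp add: scaleR_vector_matrix_assoc)
  define y where "y = y0"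
  have ypos: "\<forall>i. y $ i > 0" and yR: "y v* R = 0" and yne: "y \<noteq> 0"
    using y0pos y0R y0(1) y_def by auto
  have leftker: "\<exists>c. u = c *\<^sub>R y" if uR: "u v* R = 0" for u
  proof (cases "u = 0")
    case True then show ?thesis by (intro exI[of _ 0]) simp
  next
    case False
    obtain w c where w: "\<exists>k. w $ k > 0" "w v* R = 0" "u = c *\<^sub>R w"
      using sgn[OF False uR] by blast
    obtain t where t: "t > 0" "y = t *\<^sub>R w" using zc[OF ypos] yR w by force
    then have "w = (1/t) *\<^sub>R y" by simp
    then show ?thesis using w(3) by (intro exI[of _ "c / t"]) simp
  qed
  have yy: "inner y y > 0" using yne by simp
  have rank: "rank R = CARD('n) - 1"
  proof -
    have r: "rank R = dim (range f)" unfolding f_def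
      by (metis rank_transpose rank_dim_range)
    have "rank (transpose R) \<noteq> CARD('n)"
      using ninj full_rank_injective[of "transpose R"] unfolding f_def by simp
    moreover have "rank (transpose R) \<le> CARD('n)" using rank_bound[of "transpose R"] by simp
    ultimately have up: "rank R \<le> CARD('n) - 1" by (simp add: rank_transpose)
    define Hs where "Hs = {x. inner y x = 0}"
    have dH: "dim Hs = CARD('n) - 1" unfolding Hs_def using dim_hyperplane[OF yne] by simp
    have sH: "span Hs = Hs" unfolding Hs_def by (simp add: subspace_hyperplane)
    have inj: "inj_on f (span Hs)"
    proof (rule inj_onI)
      fix x1 x2 assume x: "x1 \<in> span Hs" "x2 \<in> span Hs" "f x1 = f x2"
      then have "(x1 - x2) v* R = 0" by (simp add: fx vector_matrix_mult_diff_distrib)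
      then obtain c where c: "x1 - x2 = c *\<^sub>R y" using leftker by blast
      have "x1 \<in> Hs" "x2 \<in> Hs" using x(1,2) sH by auto
      then have "inner y (x1 - x2) = 0" using Hs_def by (simp add: inner_diff_right)
      then have "c * inner y y = 0" using c by simp
      then have "c = 0" using yy by simp
      then show "x1 = x2" using c by simp
    qed
    have lf: "linear f" unfolding f_def by simp
    have "dim (f ` Hs) = dim Hs" using eucl.dim_image_eq[OF lf inj] .
    moreover have "dim (f ` Hs) \<le> dim (range f)" by (rule dim_subset) auto
    ultimately show ?thesis using r up dH by simp
  qed
  (* Stiemke *)
  have U: "\<exists>U. pos_vec U \<and> R *v U = 0"
  proof (rule ccontr)
    assume nU: "\<not> ?thesis"
    define A where "A = (\<lambda>x. R *v x) ` {x. \<forall>i. x $ i > 0}"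
    define B where "B = range (\<lambda>k. k *\<^sub>R y)"
    define S where "S = (\<Union>x\<in>A. \<Union>b\<in>B. {x + b})"
    have cB: "convex B" unfolding B_def
      by (metis span_singleton subspace_span subspace_imp_convex)
    have cS: "convex S" unfolding S_def A_def
      by (intro convex_sums convex_linear_image convex_pos cB) simp
    have iyR: "inner y (R *v x) = 0" for x
      by (metis dot_lmul_matrix yR inner_zero_left)
    have "0 \<notin> S"
    proof
      assume "0 \<in> S"
      then obtain x k where x: "\<forall>i. x $ i > 0" "R *v x + k *\<^sub>R y = 0"
        unfolding S_def A_def B_def by auto
      then have "inner y (R *v x + k *\<^sub>R y) = 0" by simp
      then have "k * inner y y = 0" by (simp add: inner_add_right iyR)
      then have "k = 0" using yy by simp
      then have "R *v x = 0" using x by simp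
      then show False using nU x(1) unfolding pos_vec_def by blast
    qed
    then obtain z where z0: "z \<noteq> 0" and zS: "\<forall>s\<in>S. 0 \<le> inner z s"
      using separating_hyperplane_set_0[OF cS] by blast
    have key: "0 \<le> inner (z v* R) x + k * inner z y" if "\<forall>i. x $ i > 0" for x k
    proof -
      have "R *v x + k *\<^sub>R y \<in> S" unfolding S_def A_def B_def using that by blast
      then have "0 \<le> inner z (R *v x + k *\<^sub>R y)" using zS by blast
      then show ?thesis by (simp add: inner_add_right dot_lmul_matrix)
    qed
    have zy: "inner z y = 0"
      by (rule lin_all[of "inner (z v* R) (\<chi> j. 1)"]) (use key[of "\<chi> j. 1"] in auto)
    have zR: "(z v* R) $ j \<ge> 0" for j
    proof -
      have h: "0 \<le> (z v* R) $ j + e * sum (\<lambda>i. (z v* R) $ i) UNIV" if "e > 0" for e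
      proof -
        have "0 \<le> inner (z v* R) (axis j 1 + (\<chi> j. e)) + 0 * inner z y"
          by (rule key) (use that in \<open>auto simp: axis_def\<close>)
        then show ?thesis by (simp add: inner_add_right inner_axis inner_ones)
      qed
      show ?thesis by (rule eps_lim[of _ "sum (\<lambda>i. (z v* R) $ i) UNIV"]) (use h in blast)
    qed
    have wne: "z v* R \<noteq> 0"
    proof
      assume "z v* R = 0"
      then obtain c where c: "z = c *\<^sub>R y" using leftker by blast
      then have "c * inner y y = 0" using zy by simp
      then have "c = 0" using yy by simp
      then show False using c z0 by simp
    qed
    show False
    proof (cases "\<exists>k. z $ k > 0")
      case True
      then obtain k where k: "z $ k > 0" by blast
      have "\<exists>t>0. y = t *\<^sub>R z"
        by (rule zc2[OF H ypos k]) (use zR in \<open>auto simp: vm_lin yR intro: mult_nonneg_nonneg\<close>)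
      then obtain t where "t > 0" "y = t *\<^sub>R z" by blast
      then have "t *\<^sub>R (z v* R) = 0" using yR by (simp add: scaleR_vector_matrix_assoc)
      then show False using wne \<open>t > 0\<close> by simp
    next
      case False
      define y' where "y' = - z"
      have y'0: "\<forall>i. y' $ i \<ge> 0" using False y'_def by (auto simp: not_less)
      have y'R: "\<forall>j. (y' v* R) $ j \<le> 0" using zR y'_def by (simp add: vm_neg)
      have y'ne: "y' \<noteq> 0" using z0 y'_def by simp
      have y'pos: "\<forall>i. y' $ i > 0" using posK[OF H y'0 y'R y'ne] by blast
      have yk: "y $ k > 0" for k using ypos by blast
      have "\<exists>t>0. y' = t *\<^sub>R y"
        by (rule zc2[OF H y'pos yk]) (use y'R in \<open>auto simp: vm_lin yR\<close>)
      then obtain t where "y' = t *\<^sub>R y" by blast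
      then have "y' v* R = 0" using yR by (simp add: scaleR_vector_matrix_assoc)
      then show False using wne y'_def by (simp add: vm_neg)
    qed
  qed
  show ?thesis using rank U ypos yR unfolding pos_vec_def by blast
qed

end
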